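(* For $\delta\in[-1,1]$ let $C_\delta(u,v)=\dfrac{uv}{1+\delta(1-u)(1-v)}$, $(u,v)\in[0,1]^2$ (Ali–Mikhail–Haq family). If $\delta\in[0,1]$, then $C_\delta$ is $I(-1,1)$ and $I(1,-1)$. If $\delta\in[-1,0]$, then $C_\delta$ is $I(1,1)$ and $I(-1,-1)$.
   Context: For $\alpha\in\{-1,1\}^2$ and a random pair $\mathbf X$, write $\alpha\mathbf X=(\alpha_1X_1,\alpha_2X_2)$; inequalities between vectors are componentwise. $\mathbf X$ is $I(\alpha)$ if for every $\mathbf x\in\mathbb R^2$, $\mathbb P[\alpha\mathbf X>\mathbf x\mid \alpha\mathbf X>\mathbf x']\le \mathbb P[\alpha\mathbf X>\mathbf x\mid \alpha\mathbf X>\mathbf x'']$ whenever $\mathbf x'\le\mathbf x''$ and $\mathbb P[\alpha\mathbf X>\mathbf x'']>0$. A copula is $I(\alpha)$ if a random vector with that distribution function is. $C_\delta$ is a 2-copula for each $\delta\in[-1,1]$. *)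

theory Defs
  imports "HOL-Probability.Probability"
begin

definition sgnact :: "real \<times> real \<Rightarrow> real \<times> real \<Rightarrow> real \<times> real" where
  "sgnact \<alpha> y = (fst \<alpha> * fst y, snd \<alpha> * snd y)"

definition vgt :: "real \<times> real \<Rightarrow> real \<times> real \<Rightarrow> bool" where
  "vgt a b \<longleftrightarrow> fst a > fst b \<and> snd a > snd b"

definition vle :: "real \<times> real \<Rightarrow> real \<times> real \<Rightarrow> bool" where
  "vle a b \<longleftrightarrow> fst a \<le> fst b \<and> snd a \<le> snd b"

definition condP :: "'a measure \<Rightarrow> 'a set \<Rightarrow> 'a set \<Rightarrow> real" where
  "condP M A B = measure M (A \<inter> B) / measure M B"

definition rv_I :: "'a measure \<Rightarrow> ('a \<Rightarrow> real \<times> real) \<Rightarrow> real \<times> real \<Rightarrow> bool" where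
  "rv_I M X \<alpha> \<longleftrightarrow>
     (\<forall>x x' x''. vle x' x'' \<longrightarrow>
        measure M {\<omega>\<in>space M. vgt (sgnact \<alpha> (X \<omega>)) x''} > 0 \<longrightarrow>
        condP M {\<omega>\<in>space M. vgt (sgnact \<alpha> (X \<omega>)) x} {\<omega>\<in>space M. vgt (sgnact \<alpha> (X \<omega>)) x'}
        \<le> condP M {\<omega>\<in>space M. vgt (sgnact \<alpha> (X \<omega>)) x} {\<omega>\<in>space M. vgt (sgnact \<alpha> (X \<omega>)) x''})"

definition clamp01 :: "real \<Rightarrow> real" where
  "clamp01 u = max 0 (min 1 u)"

definition has_dist_fun :: "'a measure \<Rightarrow> ('a \<Rightarrow> real \<times> real) \<Rightarrow> (real \<Rightarrow> real \<Rightarrow> real) \<Rightarrow> bool" where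
  "has_dist_fun M X C \<longleftrightarrow>
     (\<forall>u v. measure M {\<omega>\<in>space M. fst (X \<omega>) \<le> u \<and> snd (X \<omega>) \<le> v} = C (clamp01 u) (clamp01 v))"

text \<open>A copula is I(alpha) if a random pair with that distribution function is
  (the property only depends on the distribution, so we require it of every such pair).\<close>
definition copula_I :: "(real \<Rightarrow> real \<Rightarrow> real) \<Rightarrow> real \<times> real \<Rightarrow> bool" where
  "copula_I C \<alpha> \<longleftrightarrow>
     (\<forall>(M :: (real \<times> real) measure) X. prob_space M \<longrightarrow> X \<in> M \<rightarrow>\<^sub>M borel \<longrightarrow>
        has_dist_fun M X C \<longrightarrow> rv_I M X \<alpha>)"

definition AMH :: "real \<Rightarrow> real \<Rightarrow> real \<Rightarrow> real" where
  "AMH \<delta> u v = u * v / (1 + \<delta> * (1 - u) * (1 - v))"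

end

theory Submission
  imports Defs
begin



lemma D_ident: "(1 + d*(1-u)*(1-v')) * (1 + d*(1-u')*(1-v)) - (1 + d*(1-u)*(1-v)) * (1 + d*(1-u')*(1-v'))
   = - d * (u'-u) * (v'-v)" for d u u' v v' :: real
  by (simp add: algebra_simps)

lemma AMH_nonneg: "-1 \<le> d \<Longrightarrow> d \<le> 1 \<Longrightarrow> 0 \<le> u \<Longrightarrow> u \<le> 1 \<Longrightarrow> 0 \<le> v \<Longrightarrow> v \<le> 1 \<Longrightarrow> 0 \<le> AMH d u v"
proof -
  assume a: "-1 \<le> d" "d \<le> 1" "0 \<le> u" "u \<le> 1" "0 \<le> v" "v \<le> 1"
  have "0 \<le> (1-u)*(1-v)" "(1-u)*(1-v) \<le> 1" using a by (auto intro: mult_le_one)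
  hence "\<bar>d*((1-u)*(1-v))\<bar> \<le> 1" using a by (auto simp: abs_mult intro: mult_le_one)
  hence "0 \<le> 1 + d*(1-u)*(1-v)" by (auto simp: mult.assoc)
  thus ?thesis using a unfolding AMH_def by auto
qed

lemma D_pos: "-1 \<le> d \<Longrightarrow> d \<le> 1 \<Longrightarrow> 0 < u \<Longrightarrow> u \<le> 1 \<Longrightarrow> 0 \<le> v \<Longrightarrow> v \<le> 1 \<Longrightarrow> 0 < 1 + d*(1-u)*(1-v)" for d u v :: real
proof -
  assume a: "-1 \<le> d" "d \<le> 1" "0 < u" "u \<le> 1" "0 \<le> v" "v \<le> 1"
  have w0: "0 \<le> (1-u)*(1-v)" using a by (intro mult_nonneg_nonneg) auto
  have "(1-u)*(1-v) \<le> (1-u)*1" using a by (intro mult_left_mono) auto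
  hence w1: "(1-u)*(1-v) < 1" using a by auto
  have "\<bar>d*((1-u)*(1-v))\<bar> \<le> (1-u)*(1-v)" using a w0 by (simp add: abs_mult mult_left_le_one_le)
  hence "\<bar>d*((1-u)*(1-v))\<bar> < 1" using w1 by linarith
  thus ?thesis by (auto simp: mult.assoc)
qed


lemma AMH_0l[simp]: "AMH d 0 v = 0" and AMH_0r[simp]: "AMH d u 0 = 0"
  and AMH_1l[simp]: "AMH d 1 v = v" and AMH_1r[simp]: "AMH d u 1 = u"
  by (auto simp: AMH_def)

lemma AMH_sym: "AMH d u v = AMH d v u"
  by (simp add: AMH_def mult.commute mult.left_commute)

lemma amh_TP2:
  fixes d u u' v v' :: real
  assumes "-1 \<le> d" "d \<le> 0" "0 \<le> u" "u \<le> u'" "u' \<le> 1" "0 \<le> v" "v \<le> v'" "v' \<le> 1"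
  shows "AMH d u' v * AMH d u v' \<le> AMH d u v * AMH d u' v'"
proof (cases "u = 0 \<or> v = 0")
  case True
  have "0 \<le> AMH d u v * AMH d u' v'" using assms
    by (intro mult_nonneg_nonneg AMH_nonneg) auto
  thus ?thesis using True by auto
next
  case False
  hence up: "0 < u" "0 < v" using assms by auto
  define Da where "Da = 1 + d*(1-u')*(1-v)"
  define Db where "Db = 1 + d*(1-u)*(1-v')"
  define Dc where "Dc = 1 + d*(1-u)*(1-v)"
  define Dd where "Dd = 1 + d*(1-u')*(1-v')"
  have pos: "0 < Da" "0 < Db" "0 < Dc" "0 < Dd" unfolding Da_def Db_def Dc_def Dd_def
    using assms up by (auto intro!: D_pos)
  have "Db * Da - Dc * Dd = - d * (u'-u) * (v'-v)" unfolding Da_def Db_def Dc_def Dd_def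
    by (rule D_ident)
  moreover have "0 \<le> - d * (u'-u) * (v'-v)" using assms by (intro mult_nonneg_nonneg) auto
  ultimately have le: "Dc * Dd \<le> Da * Db" by (simp add: algebra_simps)
  have l: "AMH d u' v * AMH d u v' = (u * u' * v * v') / (Da * Db)"
    unfolding AMH_def Da_def Db_def by (simp add: algebra_simps)
  have r: "AMH d u v * AMH d u' v' = (u * u' * v * v') / (Dc * Dd)"
    unfolding AMH_def Dc_def Dd_def by (simp add: algebra_simps)
  show ?thesis unfolding l r
    by (rule divide_left_mono) (use le pos assms in auto)
qed

lemma g_ident: "0 < 1 + d*(1-s)*(1-t) \<Longrightarrow> s - AMH d s t = s*(1-t)*(1+d*(1-s)) / (1 + d*(1-s)*(1-t))"
  for d s t :: real
  unfolding AMH_def by (simp add: field_simps)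

lemma amh_RR2:
  fixes d s s' t t' :: real
  assumes "0 \<le> d" "d \<le> 1" "0 \<le> s" "s \<le> s'" "s' \<le> 1" "0 \<le> t" "t \<le> t'" "t' \<le> 1"
  shows "(s' - AMH d s' t') * (s - AMH d s t) \<le> (s - AMH d s t') * (s' - AMH d s' t)"
proof -
  define Da where "Da = 1 + d*(1-s')*(1-t')"
  define Db where "Db = 1 + d*(1-s)*(1-t)"
  define Dc where "Dc = 1 + d*(1-s)*(1-t')"
  define Dd where "Dd = 1 + d*(1-s')*(1-t)"
  have nn: "0 \<le> d*(1-x)*(1-y)" if "x \<le> 1" "y \<le> 1" for x y
    using assms that by (intro mult_nonneg_nonneg) auto
  have pos: "0 < Da" "0 < Db" "0 < Dc" "0 < Dd" unfolding Da_def Db_def Dc_def Dd_def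
    using nn assms by (smt (verit))+
  have "Dc * Dd - Db * Da = - d * (s'-s) * (t'-t)" unfolding Da_def Db_def Dc_def Dd_def
    by (rule D_ident)
  moreover have "0 \<le> d * (s'-s) * (t'-t)" using assms by (intro mult_nonneg_nonneg) auto
  ultimately have le: "Dc * Dd \<le> Da * Db" by (simp add: algebra_simps)
  define N where "N = s'*(1-t')*(1+d*(1-s')) * (s*(1-t)*(1+d*(1-s)))"
  have N0: "0 \<le> N" unfolding N_def using assms
    by (intro mult_nonneg_nonneg) auto
  have l: "(s' - AMH d s' t') * (s - AMH d s t) = N / (Da*Db)"
    using pos unfolding N_def Da_def Db_def by (simp add: g_ident)
  have r: "(s - AMH d s t') * (s' - AMH d s' t) = N / (Dc*Dd)"
    using pos unfolding N_def Dc_def Dd_def by (simp add: g_ident algebra_simps)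
  show ?thesis unfolding l r
    by (rule divide_left_mono) (use le pos N0 in auto)
qed



lemma E_ident: "(1+d*(1-u-v'))*(1+d*(1-u'-v)) = (1+d*(1-u-v))*(1+d*(1-u'-v')) + d^2*((u'-u)*(v'-v))"
  for d u u' v v' :: real
  by (simp add: algebra_simps power2_eq_square)


definition Sv :: "real \<Rightarrow> real \<Rightarrow> real \<Rightarrow> real" where
  "Sv d u v = 1 - u - v + AMH d u v"

lemma Sv_ident: "0 < 1 + d*(1-u)*(1-v) \<Longrightarrow>
   Sv d u v = (1-u)*(1-v)*(1+d*(1-u-v)) / (1 + d*(1-u)*(1-v))" for d u v :: real
  unfolding Sv_def AMH_def by (simp add: field_simps)

lemma D_mono_neg: "d \<le> 0 \<Longrightarrow> u \<le> x \<Longrightarrow> x \<le> 1 \<Longrightarrow> v \<le> y \<Longrightarrow> y \<le> 1 \<Longrightarrow>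
   1 + d*(1-u)*(1-v) \<le> 1 + d*(1-x)*(1-y)" for d u v x y :: real
proof -
  assume a: "d \<le> 0" "u \<le> x" "x \<le> 1" "v \<le> y" "y \<le> 1"
  have "(1-x)*(1-y) \<le> (1-u)*(1-v)" using a by (intro mult_mono) auto
  hence "d*((1-u)*(1-v)) \<le> d*((1-x)*(1-y))" using a by (intro mult_left_mono_neg)
  thus ?thesis by (simp add: mult.assoc)
qed

lemma amh_S_TP2:
  fixes d u u' v v' :: real
  assumes "-1 \<le> d" "d \<le> 0" "0 \<le> u" "u \<le> u'" "u' \<le> 1" "0 \<le> v" "v \<le> v'" "v' \<le> 1"
  shows "Sv d u v' * Sv d u' v \<le> Sv d u v * Sv d u' v'"
proof (cases "0 < 1 + d*(1-u)*(1-v)")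
  case True
  define D1 where "D1 = 1 + d*(1-u)*(1-v')"
  define D2 where "D2 = 1 + d*(1-u')*(1-v)"
  define D3 where "D3 = 1 + d*(1-u)*(1-v)"
  define D4 where "D4 = 1 + d*(1-u')*(1-v')"
  define E1 where "E1 = 1+d*(1-u-v')"
  define E2 where "E2 = 1+d*(1-u'-v)"
  define E3 where "E3 = 1+d*(1-u-v)"
  define E4 where "E4 = 1+d*(1-u'-v')"
  have p3: "0 < D3" using True D3_def by simp
  have "D3 \<le> D1" "D3 \<le> D2" "D3 \<le> D4" unfolding D1_def D2_def D3_def D4_def
    using assms D_mono_neg[of d u u v v'] D_mono_neg[of d u u' v v] D_mono_neg[of d u u' v v'] by auto
  hence pos: "0 < D1" "0 < D2" "0 < D4" using p3 by auto
  have ED: "D3 \<le> E3" "D4 \<le> E4" unfolding D3_def E3_def D4_def E4_def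
    using assms by (auto simp: algebra_simps intro!: mult_nonneg_nonneg mult_nonpos_nonneg)
  define P where "P = (1-u)*(1-u')*(1-v)*(1-v')"
  define K where "K = (u'-u)*(v'-v)"
  define X where "X = E3*E4"
  define Y where "Y = D3*D4"
  have P0: "0 \<le> P" "0 \<le> K" unfolding P_def K_def using assms by (auto intro!: mult_nonneg_nonneg)
  have Y0: "0 \<le> Y" "Y \<le> X" unfolding X_def Y_def using p3 pos ED by (auto intro!: mult_mono)
  have "0 \<le> (1+d)*Y" using assms Y0 by auto
  hence XY: "0 \<le> X + d*Y" using Y0 by (simp add: algebra_simps)
  have e12: "E1*E2 = X + d^2*K" unfolding E1_def E2_def X_def E3_def E4_def K_def by (rule E_ident)
  have d12: "D1*D2 = Y - d*K" unfolding D1_def D2_def Y_def D3_def D4_def K_def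
    using D_ident[of d u v' u' v] by (simp add: algebra_simps)
  have "P*X*(D1*D2) - P*(E1*E2)*Y = P*K*(-d)*(X + d*Y)" unfolding e12 d12
    by (simp add: algebra_simps power2_eq_square)
  moreover have "0 \<le> P*K*(-d)*(X + d*Y)" using P0 XY assms by (intro mult_nonneg_nonneg) auto
  ultimately have cross: "P*(E1*E2)*Y \<le> P*X*(D1*D2)" by linarith
  have l: "Sv d u v' * Sv d u' v = (P*(E1*E2)) / (D1*D2)"
    using pos unfolding D1_def D2_def E1_def E2_def P_def by (simp add: Sv_ident)
  have r: "Sv d u v * Sv d u' v' = (P*X) / Y"
    using pos p3 unfolding D3_def D4_def E3_def E4_def P_def X_def Y_def by (simp add: Sv_ident)
  have "(P*(E1*E2)) / (D1*D2) \<le> (P*X) / Y"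
    using cross pos p3 unfolding Y_def by (simp add: divide_simps)
  thus ?thesis using l r by simp
next
  case False
  have u0: "u = 0"
  proof (rule ccontr)
    assume "u \<noteq> 0" hence "0 < u" using assms by auto
    thus False using False D_pos[of d u v] assms by auto
  qed
  have v0: "v = 0"
  proof (rule ccontr)
    assume "v \<noteq> 0" hence "0 < v" using assms by auto
    thus False using False D_pos[of d v u] assms by (auto simp: mult.commute mult.left_commute)
  qed
  have "u' * v' \<le> AMH d u' v'"
  proof (cases "u' = 0 \<or> v' = 0")
    case True thus ?thesis by auto
  next
    case F: False
    hence "0 < u'" "0 < v'" using assms u0 v0 by auto
    hence D0: "0 < 1 + d*(1-u')*(1-v')" using assms by (intro D_pos) auto
    have "d*(1-u')*(1-v') \<le> 0" using assms
      by (intro mult_nonpos_nonneg) (auto intro: mult_nonpos_nonneg)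
    hence D1: "1 + d*(1-u')*(1-v') \<le> 1" by simp
    have "u' * v' / 1 \<le> u' * v' / (1 + d*(1-u')*(1-v'))"
      by (rule divide_left_mono) (use D0 D1 \<open>0 < u'\<close> \<open>0 < v'\<close> in auto)
    thus ?thesis unfolding AMH_def by simp
  qed
  thus ?thesis using u0 v0 unfolding Sv_def by (simp add: algebra_simps)
qed



lemma cl_props: "0 \<le> clamp01 a" "clamp01 a \<le> 1" "clamp01 1 = 1" "clamp01 0 = 0"
  by (auto simp: clamp01_def)
lemma cl_mono: "a \<le> b \<Longrightarrow> clamp01 a \<le> clamp01 b"
  by (auto simp: clamp01_def)
lemma cl_lip: "b \<le> a \<Longrightarrow> clamp01 a - clamp01 b \<le> a - b"
  by (auto simp: clamp01_def)

lemma (in finite_measure) measure_eq_null_diff: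
  assumes "A \<in> sets M" "B \<in> sets M" "N \<in> sets M" "A - B \<subseteq> N" "B - A \<subseteq> N" "measure M N = 0"
  shows "measure M A = measure M B"
proof -
  have "measure M A \<le> measure M (B \<union> N)" using assms by (intro finite_measure_mono) auto
  also have "\<dots> \<le> measure M B + measure M N" using assms by (intro measure_Un_le) auto
  finally have 1: "measure M A \<le> measure M B" using assms by simp
  have "measure M B \<le> measure M (A \<union> N)" using assms by (intro finite_measure_mono) auto
  also have "\<dots> \<le> measure M A + measure M N" using assms by (intro measure_Un_le) auto
  finally show ?thesis using 1 assms by simp
qed

locale amh_setup =
  fixes M :: "'a measure" and X :: "'a \<Rightarrow> real \<times> real" and d :: real
  assumes ps: "prob_space M" and Xm[measurable]: "X \<in> M \<rightarrow>\<^sub>M borel"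
    and df: "has_dist_fun M X (AMH d)" and d1: "-1 \<le> d" "d \<le> 1"
begin

interpretation prob_space M by (rule ps)

lemma Xm2[measurable]: "X \<in> M \<rightarrow>\<^sub>M borel \<Otimes>\<^sub>M borel"
  using Xm by (simp add: borel_prod)

lemma F: "measure M {\<omega>\<in>space M. fst (X \<omega>) \<le> a \<and> snd (X \<omega>) \<le> b} = AMH d (clamp01 a) (clamp01 b)"
  using df unfolding has_dist_fun_def by blast

lemma msle: "{\<omega>\<in>space M. fst (X \<omega>) \<le> a \<and> snd (X \<omega>) \<le> b} \<in> sets M" by measurable
lemma msle1: "{\<omega>\<in>space M. fst (X \<omega>) \<le> a} \<in> sets M" by measurable
lemma mseq1: "{\<omega>\<in>space M. fst (X \<omega>) = a} \<in> sets M" by measurable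


abbreviation X1 where "X1 \<omega> \<equiv> fst (X \<omega>)"
abbreviation X2 where "X2 \<omega> \<equiv> snd (X \<omega>)"

lemma E1: "measure M {\<omega>\<in>space M. X1 \<omega> \<le> 1 \<and> X2 \<omega> \<le> 1} = 1"
  using F[of 1 1] by (simp add: cl_props)

lemma null_compl: "measure M (space M - {\<omega>\<in>space M. X1 \<omega> \<le> 1 \<and> X2 \<omega> \<le> 1}) = 0"
  using E1 prob_compl[of "{\<omega>\<in>space M. X1 \<omega> \<le> 1 \<and> X2 \<omega> \<le> 1}"] msle by simp

lemma P1: "measure M {\<omega>\<in>space M. X1 \<omega> \<le> a} = clamp01 a"
proof -
  have "measure M {\<omega>\<in>space M. X1 \<omega> \<le> a} = measure M {\<omega>\<in>space M. X1 \<omega> \<le> a \<and> X2 \<omega> \<le> 1}"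
    by (rule measure_eq_null_diff[OF _ _ _ _ _ null_compl]) auto
  thus ?thesis using F[of a 1] by (simp add: cl_props)
qed

lemma P2: "measure M {\<omega>\<in>space M. X2 \<omega> \<le> b} = clamp01 b"
proof -
  have "measure M {\<omega>\<in>space M. X2 \<omega> \<le> b} = measure M {\<omega>\<in>space M. X1 \<omega> \<le> 1 \<and> X2 \<omega> \<le> b}"
    by (rule measure_eq_null_diff[OF _ _ _ _ _ null_compl]) auto
  thus ?thesis using F[of 1 b] by (simp add: cl_props)
qed

lemma Z1: "measure M {\<omega>\<in>space M. X1 \<omega> = a} = 0"
proof -
  have "measure M {\<omega>\<in>space M. X1 \<omega> = a} \<le> 0 + e" if e: "0 < e" for e
  proof -
    have "measure M {\<omega>\<in>space M. X1 \<omega> = a} \<le> measure M ({\<omega>\<in>space M. X1 \<omega> \<le> a} - {\<omega>\<in>space M. X1 \<omega> \<le> a - e})"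
      using e by (intro finite_measure_mono) auto
    also have "\<dots> = clamp01 a - clamp01 (a - e)"
      by (subst finite_measure_Diff) (use e in \<open>auto simp: P1\<close>)
    also have "\<dots> \<le> e" using cl_lip[of "a - e" a] e by simp
    finally show ?thesis by simp
  qed
  hence "measure M {\<omega>\<in>space M. X1 \<omega> = a} \<le> 0" by (rule field_le_epsilon)
  thus ?thesis using measure_nonneg[of M] by (meson order_antisym)
qed

lemma Z2: "measure M {\<omega>\<in>space M. X2 \<omega> = a} = 0"
proof -
  have "measure M {\<omega>\<in>space M. X2 \<omega> = a} \<le> 0 + e" if e: "0 < e" for e
  proof -
    have "measure M {\<omega>\<in>space M. X2 \<omega> = a} \<le> measure M ({\<omega>\<in>space M. X2 \<omega> \<le> a} - {\<omega>\<in>space M. X2 \<omega> \<le> a - e})"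
      using e by (intro finite_measure_mono) auto
    also have "\<dots> = clamp01 a - clamp01 (a - e)"
      by (subst finite_measure_Diff) (use e in \<open>auto simp: P2\<close>)
    also have "\<dots> \<le> e" using cl_lip[of "a - e" a] e by simp
    finally show ?thesis by simp
  qed
  hence "measure M {\<omega>\<in>space M. X2 \<omega> = a} \<le> 0" by (rule field_le_epsilon)
  thus ?thesis using measure_nonneg[of M] by (meson order_antisym)
qed


lemma G11: "measure M {\<omega>\<in>space M. vgt (sgnact (1,1) (X \<omega>)) x} = Sv d (clamp01 (fst x)) (clamp01 (snd x))"
proof -
  obtain a b where x: "x = (a,b)" by (cases x)
  let ?U = "{\<omega>\<in>space M. X1 \<omega> \<le> a}" and ?V = "{\<omega>\<in>space M. X2 \<omega> \<le> b}"
  have set: "{\<omega>\<in>space M. vgt (sgnact (1,1) (X \<omega>)) x} = space M - (?U \<union> ?V)"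
    by (auto simp: x vgt_def sgnact_def)
  have VU: "?V \<inter> ?U = {\<omega>\<in>space M. X1 \<omega> \<le> a \<and> X2 \<omega> \<le> b}" by auto
  have "measure M (?U \<union> ?V) = clamp01 a + (clamp01 b - AMH d (clamp01 a) (clamp01 b))"
    by (simp add: finite_measure_Union' finite_measure_Diff' VU F P1 P2)
  moreover have "measure M (space M - (?U \<union> ?V)) = 1 - measure M (?U \<union> ?V)"
    by (rule prob_compl) measurable
  ultimately show ?thesis unfolding set by (simp add: x Sv_def)
qed

lemma Gmm: "measure M {\<omega>\<in>space M. vgt (sgnact (-1,-1) (X \<omega>)) x} = AMH d (clamp01 (- fst x)) (clamp01 (- snd x))"
proof -
  obtain a b where x: "x = (a,b)" by (cases x)
  have set: "{\<omega>\<in>space M. vgt (sgnact (-1,-1) (X \<omega>)) x} = {\<omega>\<in>space M. X1 \<omega> < -a \<and> X2 \<omega> < -b}"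
    by (auto simp: x vgt_def sgnact_def)
  have N: "measure M ({\<omega>\<in>space M. X1 \<omega> = -a} \<union> {\<omega>\<in>space M. X2 \<omega> = -b}) = 0"
    using measure_Un_le[of "{\<omega>\<in>space M. X1 \<omega> = -a}" M "{\<omega>\<in>space M. X2 \<omega> = -b}"] Z1 Z2
      measure_nonneg[of M "{\<omega>\<in>space M. X1 \<omega> = -a} \<union> {\<omega>\<in>space M. X2 \<omega> = -b}"] by simp
  have "measure M {\<omega>\<in>space M. X1 \<omega> < -a \<and> X2 \<omega> < -b} = measure M {\<omega>\<in>space M. X1 \<omega> \<le> -a \<and> X2 \<omega> \<le> -b}"
    by (rule measure_eq_null_diff[OF _ _ _ _ _ N]) auto
  thus ?thesis unfolding set by (simp add: x F)
qed

lemma Gm1: "measure M {\<omega>\<in>space M. vgt (sgnact (-1,1) (X \<omega>)) x} = clamp01 (- fst x) - AMH d (clamp01 (- fst x)) (clamp01 (snd x))"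
proof -
  obtain a b where x: "x = (a,b)" by (cases x)
  let ?U = "{\<omega>\<in>space M. X1 \<omega> \<le> -a}" and ?V = "{\<omega>\<in>space M. X2 \<omega> \<le> b}"
  have set: "{\<omega>\<in>space M. vgt (sgnact (-1,1) (X \<omega>)) x} = {\<omega>\<in>space M. X1 \<omega> < -a \<and> X2 \<omega> > b}"
    by (auto simp: x vgt_def sgnact_def)
  have "measure M {\<omega>\<in>space M. X1 \<omega> < -a \<and> X2 \<omega> > b} = measure M (?U - ?V)"
    by (rule measure_eq_null_diff[OF _ _ _ _ _ Z1[of "-a"]]) auto
  also have "\<dots> = clamp01 (-a) - AMH d (clamp01 (-a)) (clamp01 b)"
  proof -
    have UV: "?U \<inter> ?V = {\<omega>\<in>space M. X1 \<omega> \<le> -a \<and> X2 \<omega> \<le> b}" by auto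
    show ?thesis by (simp add: finite_measure_Diff' UV F P1)
  qed
  finally show ?thesis unfolding set by (simp add: x)
qed

lemma G1m: "measure M {\<omega>\<in>space M. vgt (sgnact (1,-1) (X \<omega>)) x} = clamp01 (- snd x) - AMH d (clamp01 (fst x)) (clamp01 (- snd x))"
proof -
  obtain a b where x: "x = (a,b)" by (cases x)
  let ?U = "{\<omega>\<in>space M. X1 \<omega> \<le> a}" and ?V = "{\<omega>\<in>space M. X2 \<omega> \<le> -b}"
  have set: "{\<omega>\<in>space M. vgt (sgnact (1,-1) (X \<omega>)) x} = {\<omega>\<in>space M. X1 \<omega> > a \<and> X2 \<omega> < -b}"
    by (auto simp: x vgt_def sgnact_def)
  have "measure M {\<omega>\<in>space M. X1 \<omega> > a \<and> X2 \<omega> < -b} = measure M (?V - ?U)"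
    by (rule measure_eq_null_diff[OF _ _ _ _ _ Z2[of "-b"]]) auto
  also have "\<dots> = clamp01 (-b) - AMH d (clamp01 a) (clamp01 (-b))"
  proof -
    have UV: "?V \<inter> ?U = {\<omega>\<in>space M. X1 \<omega> \<le> a \<and> X2 \<omega> \<le> -b}" by auto
    show ?thesis by (simp add: finite_measure_Diff' UV F P2)
  qed
  finally show ?thesis unfolding set by (simp add: x)
qed

end

lemma TP2_general:
  fixes G :: "real \<times> real \<Rightarrow> real"
  assumes TP2: "\<And>x1 y1 x2 y2. x1 \<le> y1 \<Longrightarrow> x2 \<le> y2 \<Longrightarrow> G (x1,y2) * G (y1,x2) \<le> G (y1,y2) * G (x1,x2)"
  shows "G (a1,a2) * G (b1,b2) \<le> G (max a1 b1, max a2 b2) * G (min a1 b1, min a2 b2)"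
proof (cases "a1 \<le> b1")
  case True
  show ?thesis
  proof (cases "a2 \<le> b2")
    case True2: True thus ?thesis using True by (simp add: max_def min_def mult.commute)
  next
    case False thus ?thesis using True TP2[of a1 b1 b2 a2] by (simp add: max_def min_def)
  qed
next
  case False
  show ?thesis
  proof (cases "a2 \<le> b2")
    case True thus ?thesis using False TP2[of b1 a1 a2 b2] by (simp add: max_def min_def mult.commute)
  next
    case False2: False thus ?thesis using False by (simp add: max_def min_def)
  qed
qed

lemma rv_I_from_G:
  fixes G :: "real \<times> real \<Rightarrow> real"
  assumes fm: "finite_measure M"
  and meas: "\<And>x. {\<omega>\<in>space M. vgt (sgnact \<alpha> (X \<omega>)) x} \<in> sets M"
  and Gdef: "\<And>x. measure M {\<omega>\<in>space M. vgt (sgnact \<alpha> (X \<omega>)) x} = G x"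
  and TP2: "\<And>x1 y1 x2 y2. x1 \<le> y1 \<Longrightarrow> x2 \<le> y2 \<Longrightarrow> G (x1,y2) * G (y1,x2) \<le> G (y1,y2) * G (x1,x2)"
  shows "rv_I M X \<alpha>"
  unfolding rv_I_def
proof (intro allI impI)
  interpret finite_measure M by (rule fm)
  define A where "A z = {\<omega>\<in>space M. vgt (sgnact \<alpha> (X \<omega>)) z}" for z
  define mx where "mx y z = (max (fst y) (fst z), max (snd y) (snd z))" for y z :: "real \<times> real"
  define mn where "mn y z = (min (fst y) (fst z), min (snd y) (snd z))" for y z :: "real \<times> real"
  have Int: "A y \<inter> A z = A (mx y z)" for y z unfolding A_def mx_def vgt_def by auto
  have mono: "G z \<le> G y" if "vle y z" for y z
  proof -
    have "A z \<subseteq> A y" using that unfolding A_def vgt_def vle_def by auto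
    thus ?thesis using finite_measure_mono[of "A z" "A y"] meas Gdef unfolding A_def by auto
  qed
  have nn: "0 \<le> G z" for z using Gdef[of z] measure_nonneg[of M "A z"] unfolding A_def by simp
  fix x x' x'' :: "real \<times> real"
  assume v: "vle x' x''" and pos: "0 < measure M (A x'')"
  have p'': "0 < G x''" using pos Gdef unfolding A_def by simp
  have p': "0 < G x'" using mono[OF v] p'' by simp
  let ?a = "mx x x'"
  have tp: "G ?a * G x'' \<le> G (mx ?a x'') * G (mn ?a x'')"
    using TP2_general[of G, OF TP2, of "fst ?a" "snd ?a" "fst x''" "snd x''"]
    by (simp add: mx_def mn_def)
  have e1: "mx ?a x'' = mx x x''" using v unfolding mx_def vle_def by auto
  have "vle x' (mn ?a x'')" using v unfolding mx_def mn_def vle_def by auto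
  hence "G (mn ?a x'') \<le> G x'" by (rule mono)
  hence "G (mx x x'') * G (mn ?a x'') \<le> G (mx x x'') * G x'" using nn by (intro mult_left_mono)
  hence cross: "G ?a * G x'' \<le> G (mx x x'') * G x'" using tp e1 by simp
  have "G ?a / G x' \<le> G (mx x x'') / G x''"
    using cross p' p'' by (simp add: divide_simps mult.commute)
  thus "condP M (A x) (A x') \<le> condP M (A x) (A x'')"
    unfolding condP_def Int using Gdef unfolding A_def by simp
qed



lemma cl_all: "0 \<le> clamp01 a" "clamp01 a \<le> 1" by (auto simp: clamp01_def)

lemma TP_11:
  fixes d :: real
  assumes "-1 \<le> d" "d \<le> 0" "x1 \<le> y1" "x2 \<le> y2"
  shows "Sv d (clamp01 x1) (clamp01 y2) * Sv d (clamp01 y1) (clamp01 x2)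
     \<le> Sv d (clamp01 y1) (clamp01 y2) * Sv d (clamp01 x1) (clamp01 x2)"
proof -
  have "Sv d (clamp01 x1) (clamp01 y2) * Sv d (clamp01 y1) (clamp01 x2)
     \<le> Sv d (clamp01 x1) (clamp01 x2) * Sv d (clamp01 y1) (clamp01 y2)"
    by (rule amh_S_TP2) (use assms cl_all cl_mono in auto)
  thus ?thesis by (simp only: mult.commute)
qed

lemma TP_mm:
  fixes d :: real
  assumes "-1 \<le> d" "d \<le> 0" "x1 \<le> y1" "x2 \<le> y2"
  shows "AMH d (clamp01 (- x1)) (clamp01 (- y2)) * AMH d (clamp01 (- y1)) (clamp01 (- x2))
     \<le> AMH d (clamp01 (- y1)) (clamp01 (- y2)) * AMH d (clamp01 (- x1)) (clamp01 (- x2))"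
  by (rule amh_TP2) (use assms cl_all cl_mono in auto)

lemma TP_m1:
  fixes d :: real
  assumes "0 \<le> d" "d \<le> 1" "x1 \<le> y1" "x2 \<le> y2"
  shows "(clamp01 (- x1) - AMH d (clamp01 (- x1)) (clamp01 y2)) * (clamp01 (- y1) - AMH d (clamp01 (- y1)) (clamp01 x2))
     \<le> (clamp01 (- y1) - AMH d (clamp01 (- y1)) (clamp01 y2)) * (clamp01 (- x1) - AMH d (clamp01 (- x1)) (clamp01 x2))"
  by (rule amh_RR2) (use assms cl_all cl_mono in auto)

lemma TP_1m:
  fixes d :: real
  assumes "0 \<le> d" "d \<le> 1" "x1 \<le> y1" "x2 \<le> y2"
  shows "(clamp01 (- y2) - AMH d (clamp01 x1) (clamp01 (- y2))) * (clamp01 (- x2) - AMH d (clamp01 y1) (clamp01 (- x2)))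
     \<le> (clamp01 (- y2) - AMH d (clamp01 y1) (clamp01 (- y2))) * (clamp01 (- x2) - AMH d (clamp01 x1) (clamp01 (- x2)))"
proof -
  have "(clamp01 (- x2) - AMH d (clamp01 (- x2)) (clamp01 y1)) * (clamp01 (- y2) - AMH d (clamp01 (- y2)) (clamp01 x1))
     \<le> (clamp01 (- y2) - AMH d (clamp01 (- y2)) (clamp01 y1)) * (clamp01 (- x2) - AMH d (clamp01 (- x2)) (clamp01 x1))"
    by (rule amh_RR2) (use assms cl_all cl_mono in auto)
  thus ?thesis
    by (simp only: AMH_sym[of d "clamp01 (- x2)"] AMH_sym[of d "clamp01 (- y2)"] mult.commute[of "clamp01 (- x2) - _"])
qed

lemma copula_I_via:
  fixes d :: real and \<alpha> :: "real \<times> real"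
  assumes d: "-1 \<le> d" "d \<le> 1"
  and H: "\<And>(M :: (real \<times> real) measure) X. amh_setup M X d \<Longrightarrow> rv_I M X \<alpha>"
  shows "copula_I (AMH d) \<alpha>"
  unfolding copula_I_def
proof (intro allI impI)
  fix M :: "(real \<times> real) measure" and X
  assume "prob_space M" "X \<in> M \<rightarrow>\<^sub>M borel" "has_dist_fun M X (AMH d)"
  hence "amh_setup M X d" using d unfolding amh_setup_def by auto
  thus "rv_I M X \<alpha>" by (rule H)
qed

context amh_setup
begin

lemma fm: "finite_measure M"
  using ps unfolding prob_space_def by blast

lemma msA: "{\<omega>\<in>space M. vgt (sgnact \<alpha> (X \<omega>)) x} \<in> sets M"
proof -
  have f1: "(\<lambda>\<omega>. fst \<alpha> * fst (X \<omega>)) \<in> borel_measurable M"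
    by (intro borel_measurable_times borel_measurable_const measurable_fst'[OF Xm2])
  have f2: "(\<lambda>\<omega>. snd \<alpha> * snd (X \<omega>)) \<in> borel_measurable M"
    by (intro borel_measurable_times borel_measurable_const measurable_snd'[OF Xm2])
  have "{\<omega>\<in>space M. fst x < fst \<alpha> * fst (X \<omega>)} \<inter> {\<omega>\<in>space M. snd x < snd \<alpha> * snd (X \<omega>)} \<in> sets M"
    by (intro sets.Int borel_measurable_less f1 f2 borel_measurable_const)
  moreover have "{\<omega>\<in>space M. vgt (sgnact \<alpha> (X \<omega>)) x} =
     {\<omega>\<in>space M. fst x < fst \<alpha> * fst (X \<omega>)} \<inter> {\<omega>\<in>space M. snd x < snd \<alpha> * snd (X \<omega>)}"
    unfolding vgt_def sgnact_def by auto
  ultimately show ?thesis by simp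
qed

end

theorem mainTheorem5:
  fixes \<delta> :: real
  shows "(0 \<le> \<delta> \<and> \<delta> \<le> 1 \<longrightarrow> copula_I (AMH \<delta>) (-1, 1) \<and> copula_I (AMH \<delta>) (1, -1))
       \<and> (-1 \<le> \<delta> \<and> \<delta> \<le> 0 \<longrightarrow> copula_I (AMH \<delta>) (1, 1) \<and> copula_I (AMH \<delta>) (-1, -1))"
proof (intro conjI impI; elim conjE)
  assume d: "0 \<le> \<delta>" "\<delta> \<le> 1"
  show "copula_I (AMH \<delta>) (-1, 1)"
  proof (rule copula_I_via)
    fix M :: "(real \<times> real) measure" and X assume "amh_setup M X \<delta>"
    then interpret amh_setup M X \<delta> .
    show "rv_I M X (-1, 1)"
      by (rule rv_I_from_G[OF fm msA Gm1]) (use TP_m1[OF d] in auto)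
  qed (use d in auto)
  show "copula_I (AMH \<delta>) (1, -1)"
  proof (rule copula_I_via)
    fix M :: "(real \<times> real) measure" and X assume "amh_setup M X \<delta>"
    then interpret amh_setup M X \<delta> .
    show "rv_I M X (1, -1)"
      by (rule rv_I_from_G[OF fm msA G1m]) (use TP_1m[OF d] in auto)
  qed (use d in auto)
next
  assume d: "-1 \<le> \<delta>" "\<delta> \<le> 0"
  show "copula_I (AMH \<delta>) (1, 1)"
  proof (rule copula_I_via)
    fix M :: "(real \<times> real) measure" and X assume "amh_setup M X \<delta>"
    then interpret amh_setup M X \<delta> .
    show "rv_I M X (1, 1)"
      by (rule rv_I_from_G[OF fm msA G11]) (use TP_11[OF d] in auto)
  qed (use d in auto)
  show "copula_I (AMH \<delta>) (-1, -1)"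
  proof (rule copula_I_via)
    fix M :: "(real \<times> real) measure" and X assume "amh_setup M X \<delta>"
    then interpret amh_setup M X \<delta> .
    show "rv_I M X (-1, -1)"
      by (rule rv_I_from_G[OF fm msA Gmm]) (use TP_mm[OF d] in auto)
  qed (use d in auto)
qed

end
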